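(* Let $m=2k$ with $k\in\mathbb{N}$ and $\beta\in(1,k+1)$. There exists $\epsilon_0(\beta)>0$ such that: if $x\in[\frac{1}{\beta},\frac{1}{\beta}+\epsilon_0(\beta))$ then $T_{\beta,0}(x)\in[\frac{1}{\beta}+\epsilon_0(\beta),\frac{(m-1)\beta+1}{\beta(\beta-1)}-\epsilon_0(\beta)]$; and if $x\in(\frac{(m-1)\beta+1}{\beta(\beta-1)}-\epsilon_0(\beta),\frac{(m-1)\beta+1}{\beta(\beta-1)}]$ then $T_{\beta,m}(x)\in[\frac{1}{\beta}+\epsilon_0(\beta),\frac{(m-1)\beta+1}{\beta(\beta-1)}-\epsilon_0(\beta)]$.
   Context: $T_{\beta,i}(x)=\beta x-i$ for $i\in\{0,\ldots,m\}$. *)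

theory Defs
  imports Complex_Main
begin

definition T :: "real \<Rightarrow> nat \<Rightarrow> real \<Rightarrow> real" where
  "T \<beta> i x = \<beta> * x - real i"

end

theory Submission
  imports Defs
begin

theorem lemma5p3:
  fixes k m :: nat and \<beta> :: real
  assumes "m = 2 * k" and "1 < \<beta>" and "\<beta> < real k + 1"
  shows "\<exists>\<epsilon>0 > 0.
    (\<forall>x. 1 / \<beta> \<le> x \<and> x < 1 / \<beta> + \<epsilon>0 \<longrightarrow>
       T \<beta> 0 x \<in> {1 / \<beta> + \<epsilon>0 .. ((real m - 1) * \<beta> + 1) / (\<beta> * (\<beta> - 1)) - \<epsilon>0}) \<and>
    (\<forall>x. ((real m - 1) * \<beta> + 1) / (\<beta> * (\<beta> - 1)) - \<epsilon>0 < x \<and>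
         x \<le> ((real m - 1) * \<beta> + 1) / (\<beta> * (\<beta> - 1)) \<longrightarrow>
       T \<beta> m x \<in> {1 / \<beta> + \<epsilon>0 .. ((real m - 1) * \<beta> + 1) / (\<beta> * (\<beta> - 1)) - \<epsilon>0})"
proof -
  define b where "b = ((real m - 1) * \<beta> + 1) / (\<beta> * (\<beta> - 1))"
  define c where "c = (real m + 1 - \<beta>) / (\<beta> - 1)"
  have bp: "\<beta> > 0" "\<beta> - 1 > 0" using assms by auto
  have "k \<noteq> 0" using assms by auto
  hence k1: "real k \<ge> 1" by simp
  have m: "real m = 2 * real k" using assms by simp
  have sq: "\<beta> * \<beta> < real m * \<beta>"
  proof -
    have "\<beta> * \<beta> < (real k + 1) * \<beta>" using assms bp by (simp add: mult_strict_right_mono)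
    also have "\<dots> \<le> real m * \<beta>" using m k1 bp by (intro mult_right_mono) auto
    finally show ?thesis .
  qed
  have sq2: "\<beta> * \<beta> < 1 + \<beta> * real m" using sq by (simp add: mult.commute)
  have bc: "\<beta> * b - real m = c" unfolding b_def c_def using bp
    by (simp add: field_simps)
  have d1: "1 - 1/\<beta> > 0" using assms by (simp add: field_simps)
  have d2: "b - 1 > 0" unfolding b_def using bp
    by (simp add: field_simps) (rule sq2)
  have bmc: "b - c = (\<beta> - 1) / \<beta>"
  proof -
    have "c = \<beta> * (real m + 1 - \<beta>) / (\<beta> * (\<beta> - 1))" unfolding c_def using bp by simp
    hence "b - c = (((real m - 1) * \<beta> + 1) - \<beta> * (real m + 1 - \<beta>)) / (\<beta> * (\<beta> - 1))"
      unfolding b_def by (simp add: diff_divide_distrib)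
    also have "((real m - 1) * \<beta> + 1) - \<beta> * (real m + 1 - \<beta>) = (\<beta> - 1) * (\<beta> - 1)"
      by (simp add: algebra_simps)
    also have "(\<beta> - 1) * (\<beta> - 1) / (\<beta> * (\<beta> - 1)) = (\<beta> - 1) / \<beta>" using bp by simp
    finally show ?thesis .
  qed
  have d3: "b - c > 0" using bmc bp by simp
  have d4: "c - 1/\<beta> > 0" unfolding c_def using bp sq
    by (simp add: field_simps) (rule sq2)
  define e where "e = min (min (1 - 1/\<beta>) (b - 1)) (min (b - c) (c - 1/\<beta>)) / (\<beta> + 1)"
  have ep: "e > 0" unfolding e_def using d1 d2 d3 d4 bp by simp
  have E: "e * (\<beta> + 1) \<le> 1 - 1/\<beta>" "e * (\<beta> + 1) \<le> b - 1" "e * (\<beta> + 1) \<le> b - c"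
       "e * (\<beta> + 1) \<le> c - 1/\<beta>" unfolding e_def using bp by auto
  have E1: "e \<le> 1 - 1/\<beta>" "e \<le> b - c" using E ep bp by (smt (verit) mult_le_cancel_left1)+
  show ?thesis
  proof (intro exI[of _ e] conjI allI impI)
    show "e > 0" by (rule ep)
  next
    fix x assume x: "1 / \<beta> \<le> x \<and> x < 1 / \<beta> + e"
    have "\<beta> * x \<ge> 1" using x bp by (simp add: field_simps)
    moreover have "\<beta> * x \<le> 1 + \<beta> * e"
    proof -
      have "\<beta> * x \<le> \<beta> * (1/\<beta> + e)" using x bp by simp
      also have "\<beta> * (1/\<beta> + e) = 1 + \<beta> * e" using bp by (simp add: distrib_left)
      finally show ?thesis .
    qed
    ultimately show "T \<beta> 0 x \<in> {1 / \<beta> + e .. ((real m - 1) * \<beta> + 1) / (\<beta> * (\<beta> - 1)) - e}"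
      using E E1 unfolding T_def b_def[symmetric] by (simp add: algebra_simps)
  next
    fix x assume x: "((real m - 1) * \<beta> + 1) / (\<beta> * (\<beta> - 1)) - e < x \<and>
         x \<le> ((real m - 1) * \<beta> + 1) / (\<beta> * (\<beta> - 1))"
    hence x': "b - e < x" "x \<le> b" unfolding b_def by auto
    have "\<beta> * x \<le> \<beta> * b" using x' bp by simp
    moreover have "\<beta> * x \<ge> \<beta> * (b - e)" using x' bp by simp
    ultimately show "T \<beta> m x \<in> {1 / \<beta> + e .. ((real m - 1) * \<beta> + 1) / (\<beta> * (\<beta> - 1)) - e}"
      using E E1 bc unfolding T_def b_def[symmetric] by (simp add: algebra_simps)
  qed
qed

end
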